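(* Let $f:\mathbb{R}^{n\times n}\to\mathbb{R}$ be differentiable and suppose there are constants $\underline{\nu}_f\le\overline{\nu}_f$ such that \[ \frac{\underline{\nu}_f}{2}\|Y-X\|_{\mathsf F}^2\le f(Y)-f(X)-\langle\nabla f(X),Y-X\rangle\le\frac{\overline{\nu}_f}{2}\|Y-X\|_{\mathsf F}^2\quad\text{for all }X,Y\in\mathcal{D}_n . \] Let $0<p<1$, $\epsilon\ge 0$, $\overline{\nu}_h=p(1-p)(1+\epsilon)^{p-2}$, and \[ \sigma>\sigma^*_{p,\epsilon}:=\max\Big\{\frac{\overline{\nu}_f}{\overline{\nu}_h},0\Big\}. \] If $X_{\sigma,p,\epsilon}$ is a global minimizer of \[ \min_{X\in\mathcal{D}_n}\ F_{\sigma,p,\epsilon}(X):=f(X)+\sigma\sum_{i,j=1}^n (X_{ij}+\epsilon)^p , \] then $X_{\sigma,p,\epsilon}$ is also a global minimizer of $\min_{X\in\Pi_n} f(X)$.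
   Context: $\Pi_n$ is the set of $n\times n$ permutation matrices and $\mathcal{D}_n=\{X\in\mathbb{R}^{n\times n}: X\mathbf{e}=X^{\mathsf T}\mathbf{e}=\mathbf{e},\ X\ge0\}$ the set of doubly stochastic matrices ($\mathbf{e}$ the all-ones vector). $\langle M,N\rangle=\mathrm{tr}(M^{\mathsf T}N)$ and $\|\cdot\|_{\mathsf F}$ is the Frobenius norm. *)

theory Defs
  imports "HOL-Analysis.Analysis"
begin

text \<open>n x n real matrices are rendered as real^'n^'n; the inner product on this type is
  the sum of entrywise products, i.e. tr(M^T N), and its norm is the Frobenius norm.\<close>

definition doubly_stochastic :: "(real^'n^'n) set" where
  "doubly_stochastic = {X. (\<forall>i j. X$i$j \<ge> 0) \<and> (\<forall>i. (\<Sum>j\<in>UNIV. X$i$j) = 1)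
                          \<and> (\<forall>j. (\<Sum>i\<in>UNIV. X$i$j) = 1)}"

definition permutation_matrices :: "(real^'n^'n) set" where
  "permutation_matrices = {X. \<exists>\<pi>. \<pi> permutes (UNIV :: 'n set) \<and>
                              X = (\<chi> i j. if \<pi> i = j then 1 else 0)}"

end

theory Submission
  imports Defs
begin

lemma scalar_ineq:
  fixes p eps a t :: real
  assumes p: "0 < p" "p < 1" and eps: "eps \<ge> 0"
    and at: "t = 0 \<or> (0 < a - \<bar>t\<bar> \<and> a + \<bar>t\<bar> < 1)"
  shows "(a + t + eps) powr p + (a - t + eps) powr p - 2 * (a + eps) powr p
         \<le> - (p * (1 - p) * (1 + eps) powr (p - 2)) * t\<^sup>2"
proof (cases "t = 0")
  case True then show ?thesis by simp
next
  case False
  with at have a1: "0 < a - \<bar>t\<bar>" "a + \<bar>t\<bar> < 1" by auto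
  define c where "c = p * (1 - p) * (1 + eps) powr (p - 2)"
  define phi where "phi = (\<lambda>y::real. - ((y + eps) powr p) - c / 2 * y\<^sup>2)"
  define q where "q = (\<lambda>y::real. p * (y + eps) powr (p - 1) + c * y)"
  have qmono: "q y \<le> q x" if "x \<in> {0<..<1}" "y \<in> {0<..<1}" "x \<le> y" for x y
  proof (rule DERIV_nonpos_imp_nonincreasing[OF \<open>x \<le> y\<close>])
    fix s assume s: "x \<le> s" "s \<le> y"
    hence s01: "0 < s" "s < 1" using that by auto
    have pos: "0 < s + eps" using s01 eps by linarith
    have "DERIV q s :> p * ((p - 1) * (s + eps) powr (p - 1 - 1) * 1) + c * 1"
      unfolding q_def
      by (intro derivative_intros DERIV_cmult has_real_derivative_powr' pos) (auto intro!: derivative_eq_intros)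
    moreover have "p * ((p - 1) * (s + eps) powr (p - 1 - 1) * 1) + c * 1 \<le> 0"
    proof -
      have "(1 + eps) powr (p - 2) \<le> (s + eps) powr (p - 2)"
        by (rule powr_mono2') (use p pos s01 in auto)
      hence "p * (1 - p) * (1 + eps) powr (p - 2) \<le> p * (1 - p) * (s + eps) powr (p - 2)"
        using p by (intro mult_left_mono) auto
      thus ?thesis unfolding c_def by (simp add: algebra_simps)
    qed
    ultimately show "\<exists>y. DERIV q s :> y \<and> y \<le> 0" by blast
  qed
  have conv: "convex_on {0<..<1} phi"
  proof (rule convex_on_realI[where f' = "\<lambda>y. - q y"])
    show "connected {0<..<1::real}" by simp
    fix x assume x: "x \<in> {0<..<1::real}"
    have pos: "0 < x + eps" using x eps by auto
    show "(phi has_real_derivative - q x) (at x)"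
      unfolding phi_def q_def
      by (rule DERIV_cong[OF _ refl], (rule derivative_eq_intros has_real_derivative_powr' | use pos in simp)+)
  next
    fix x y :: real assume "x \<in> {0<..<1}" "y \<in> {0<..<1}" "x \<le> y"
    thus "- q x \<le> - q y" using qmono by auto
  qed
  have mem: "a + t \<in> {0<..<1}" "a - t \<in> {0<..<1}" using a1 by (auto split: abs_split)
  have "phi ((1 - 1/2) *\<^sub>R (a + t) + (1/2) *\<^sub>R (a - t)) \<le> (1 - 1/2) * phi (a + t) + (1/2) * phi (a - t)"
    by (rule convex_onD[OF conv]) (use mem in auto)
  moreover have "(1 - 1/2) *\<^sub>R (a + t) + (1/2) *\<^sub>R (a - t) = a" by (simp add: field_simps)
  ultimately have "phi a \<le> (1/2) * phi (a + t) + (1/2) * phi (a - t)" by simp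
  thus ?thesis unfolding phi_def c_def[symmetric] by (simp add: algebra_simps power2_eq_square)
qed


lemma ds_bounds:
  assumes "X \<in> doubly_stochastic"
  shows "0 \<le> X$i$j" "X$i$j \<le> 1"
proof -
  show "0 \<le> X$i$j" using assms by (auto simp: doubly_stochastic_def)
  have "X$i$j \<le> (\<Sum>j\<in>UNIV. X$i$j)"
    by (rule member_le_sum) (use assms in \<open>auto simp: doubly_stochastic_def\<close>)
  thus "X$i$j \<le> 1" using assms by (auto simp: doubly_stochastic_def)
qed

lemma two_le_sum:
  fixes g :: "'a::finite \<Rightarrow> real"
  assumes "\<forall>k. g k \<ge> 0" "k1 \<noteq> k2"
  shows "g k1 + g k2 \<le> (\<Sum>k\<in>UNIV. g k)"
proof -
  have "(\<Sum>k\<in>{k1,k2}. g k) \<le> (\<Sum>k\<in>UNIV. g k)"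
    by (rule sum_mono2) (use assms in auto)
  thus ?thesis using assms by simp
qed

lemma perm_of_01:
  fixes X :: "real^'n^'n"
  assumes X: "X \<in> doubly_stochastic" and z: "\<forall>i j. X$i$j = 0 \<or> X$i$j = 1"
  shows "X \<in> permutation_matrices"
proof -
  have nn: "\<forall>k. X$i$k \<ge> 0" "\<forall>k. X$k$i \<ge> 0" for i using X by (auto simp: doubly_stochastic_def)
  have rex: "\<exists>j. X$i$j = 1" for i
  proof (rule ccontr)
    assume "\<not> ?thesis"
    hence "\<forall>j. X$i$j = 0" using z by auto
    hence "(\<Sum>j\<in>UNIV. X$i$j) = 0" by simp
    thus False using X by (auto simp: doubly_stochastic_def)
  qed
  have runi: "j = j'" if "X$i$j = 1" "X$i$j' = 1" for i j j'
  proof (rule ccontr)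
    assume "j \<noteq> j'"
    from two_le_sum[OF nn(1) this, of i] that X show False by (auto simp: doubly_stochastic_def)
  qed
  have cuni: "i = i'" if "X$i$j = 1" "X$i'$j = 1" for i i' j
  proof (rule ccontr)
    assume "i \<noteq> i'"
    from two_le_sum[of "\<lambda>k. X$k$j", OF nn(2) this] that X show False by (auto simp: doubly_stochastic_def)
  qed
  define \<pi> where "\<pi> = (\<lambda>i. THE j. X$i$j = 1)"
  have pi1: "X$i$j = 1 \<longleftrightarrow> \<pi> i = j" for i j
  proof -
    obtain j0 where j0: "X$i$j0 = 1" using rex[of i] by blast
    have "X$i$(THE j. X$i$j = 1) = 1"
      by (rule theI[of "\<lambda>j. X$i$j = 1" j0]) (use j0 runi[of i] in auto)
    hence "X$i$(\<pi> i) = 1" unfolding \<pi>_def .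
    thus ?thesis using runi[of i] by auto
  qed
  have "inj \<pi>"
  proof (rule injI)
    fix i i' assume "\<pi> i = \<pi> i'"
    hence "X$i$(\<pi> i) = 1" "X$i'$(\<pi> i) = 1" using pi1 by auto
    thus "i = i'" by (rule cuni)
  qed
  hence "bij \<pi>" using finite_UNIV_inj_surj[of \<pi>] by (simp add: bij_def)
  hence "\<pi> permutes UNIV" by (intro bij_imp_permutes) auto
  moreover have "X = (\<chi> i j. if \<pi> i = j then 1 else 0)"
  proof (subst vec_eq_iff, intro allI, subst vec_eq_iff, intro allI)
    fix i j
    show "X$i$j = (\<chi> i j. if \<pi> i = j then 1 else 0)$i$j"
      using z[rule_format, of i j] pi1[of i j] by auto
  qed
  ultimately show ?thesis unfolding permutation_matrices_def by blast
qed

lemma homog_nontrivial: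
  fixes Q :: "'q set"
  assumes "finite Q"
  shows "\<And>V (a :: 'q \<Rightarrow> 'v \<Rightarrow> real). finite V \<Longrightarrow> card Q < card V \<Longrightarrow>
     \<exists>x. (\<exists>v\<in>V. x v \<noteq> 0) \<and> (\<forall>q\<in>Q. (\<Sum>v\<in>V. a q v * x v) = 0)"
  using assms
proof (induction Q rule: finite_induct)
  case empty
  then obtain v where "v \<in> V" by fastforce
  then show ?case by (intro exI[of _ "\<lambda>w. if w = v then 1 else 0"]) auto
next
  case (insert q Q)
  show ?case
  proof (cases "\<forall>v\<in>V. a q v = 0")
    case True
    from insert.IH[OF insert.prems(1), of a] insert.prems insert.hyps obtain x where
      x: "\<exists>v\<in>V. x v \<noteq> 0" "\<forall>q\<in>Q. (\<Sum>v\<in>V. a q v * x v) = 0" by auto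
    show ?thesis using x True by (intro exI[of _ x]) auto
  next
    case False
    then obtain v0 where v0: "v0 \<in> V" "a q v0 \<noteq> 0" by auto
    define V' where "V' = V - {v0}"
    have fV': "finite V'" using insert.prems by (simp add: V'_def)
    have cV': "card Q < card V'" using insert.prems insert.hyps v0 by (simp add: V'_def)
    define a' where "a' = (\<lambda>q' v. a q' v - a q' v0 * a q v / a q v0)"
    from insert.IH[OF fV' cV', of a'] obtain y where
      y: "\<exists>v\<in>V'. y v \<noteq> 0" "\<forall>q'\<in>Q. (\<Sum>v\<in>V'. a' q' v * y v) = 0" by auto
    define S where "S = (\<Sum>w\<in>V'. a q w * y w)"
    define x where "x = (\<lambda>v. if v = v0 then - S / a q v0 else y v)"
    have split: "(\<Sum>v\<in>V. b v * x v) = b v0 * (- S / a q v0) + (\<Sum>v\<in>V'. b v * y v)" for b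
    proof -
      have "(\<Sum>v\<in>V. b v * x v) = b v0 * x v0 + (\<Sum>v\<in>V'. b v * x v)"
        unfolding V'_def using insert.prems v0 by (simp add: sum.remove)
      also have "(\<Sum>v\<in>V'. b v * x v) = (\<Sum>v\<in>V'. b v * y v)"
        by (rule sum.cong) (auto simp: x_def V'_def)
      finally show ?thesis by (simp add: x_def)
    qed
    show ?thesis
    proof (intro exI[of _ x] conjI ballI)
      show "\<exists>v\<in>V. x v \<noteq> 0" using y by (auto simp: x_def V'_def)
    next
      fix q' assume "q' \<in> insert q Q"
      then consider "q' = q" | "q' \<in> Q" by auto
      then show "(\<Sum>v\<in>V. a q' v * x v) = 0"
      proof cases
        case 1 then show ?thesis using v0 by (simp add: split S_def)
      next
        case 2
        have "(\<Sum>v\<in>V'. a' q' v * y v) = (\<Sum>v\<in>V'. a q' v * y v) - a q' v0 / a q v0 * S"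
          by (simp add: a'_def S_def algebra_simps sum_subtractf sum_distrib_left)
        with y 2 have "(\<Sum>v\<in>V'. a q' v * y v) = a q' v0 / a q v0 * S" by auto
        then show ?thesis by (simp add: split)
      qed
    qed
  qed
qed


lemma row_conv:
  fixes E :: "('n::finite \<times> 'n) set" and g :: "'n \<times> 'n \<Rightarrow> real"
  shows "(\<Sum>v\<in>E. (if fst v = i then 1 else 0) * g v) = (\<Sum>j\<in>UNIV. if (i,j) \<in> E then g (i,j) else 0)"
proof -
  have "(\<Sum>v\<in>E. (if fst v = i then 1 else 0) * g v) = (\<Sum>v\<in>E. if fst v = i then g v else 0)"
    by (rule sum.cong) auto
  also have "\<dots> = (\<Sum>v\<in>{v\<in>E. fst v = i}. g v)"
    by (rule sum.inter_filter[symmetric]) simp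
  also have "{v\<in>E. fst v = i} = Pair i ` {j. (i,j) \<in> E}" by auto
  also have "(\<Sum>v\<in>Pair i ` {j. (i,j) \<in> E}. g v) = (\<Sum>j\<in>{j. (i,j) \<in> E}. g (i,j))"
    by (subst sum.reindex) (auto simp: inj_on_def)
  also have "\<dots> = (\<Sum>j\<in>UNIV. if (i,j) \<in> E then g (i,j) else 0)"
    using sum.inter_filter[of UNIV "\<lambda>j. g (i,j)" "\<lambda>j. (i,j) \<in> E"] by simp
  finally show ?thesis .
qed

lemma col_conv:
  fixes E :: "('n::finite \<times> 'n) set" and g :: "'n \<times> 'n \<Rightarrow> real"
  shows "(\<Sum>v\<in>E. (if snd v = j then 1 else 0) * g v) = (\<Sum>i\<in>UNIV. if (i,j) \<in> E then g (i,j) else 0)"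
proof -
  have "(\<Sum>v\<in>E. (if snd v = j then 1 else 0) * g v) = (\<Sum>v\<in>E. if snd v = j then g v else 0)"
    by (rule sum.cong) auto
  also have "\<dots> = (\<Sum>v\<in>{v\<in>E. snd v = j}. g v)"
    by (rule sum.inter_filter[symmetric]) simp
  also have "{v\<in>E. snd v = j} = (\<lambda>i. (i,j)) ` {i. (i,j) \<in> E}" by auto
  also have "(\<Sum>v\<in>(\<lambda>i. (i,j)) ` {i. (i,j) \<in> E}. g v) = (\<Sum>i\<in>{i. (i,j) \<in> E}. g (i,j))"
    by (subst sum.reindex) (auto simp: inj_on_def)
  also have "\<dots> = (\<Sum>i\<in>UNIV. if (i,j) \<in> E then g (i,j) else 0)"
    using sum.inter_filter[of UNIV "\<lambda>i. g (i,j)" "\<lambda>i. (i,j) \<in> E"] by simp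
  finally show ?thesis .
qed

lemma perturb:
  fixes X :: "real^'n^'n"
  assumes X: "X \<in> doubly_stochastic" and np: "X \<notin> permutation_matrices"
  shows "\<exists>d. d \<noteq> 0 \<and> (\<forall>i. (\<Sum>j\<in>UNIV. d$i$j) = 0) \<and> (\<forall>j. (\<Sum>i\<in>UNIV. d$i$j) = 0)
     \<and> (\<forall>i j. d$i$j = 0 \<or> (0 < X$i$j - \<bar>d$i$j\<bar> \<and> X$i$j + \<bar>d$i$j\<bar> < 1))"
proof -
  have nn: "\<forall>k. X$i$k \<ge> 0" "\<forall>k. X$k$i \<ge> 0" for i using X by (auto simp: doubly_stochastic_def)
  define E where "E = {(i,j). 0 < X$i$j \<and> X$i$j < 1}"
  have fE: "finite E" by simp
  have Ene: "E \<noteq> {}"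
  proof
    assume "E = {}"
    hence "\<forall>i j. X$i$j = 0 \<or> X$i$j = 1" using ds_bounds[OF X] unfolding E_def
      by (metis (mono_tags, lifting) case_prodI empty_iff less_eq_real_def mem_Collect_eq)
    thus False using perm_of_01[OF X] np by blast
  qed
  have rowcard: "2 \<le> card {j'. (i,j') \<in> E}" if "(i,j) \<in> E" for i j
  proof -
    have "X$i$j + (\<Sum>k\<in>UNIV-{j}. X$i$k) = (\<Sum>k\<in>UNIV. X$i$k)"
      by (simp add: sum.remove)
    hence s: "(\<Sum>k\<in>UNIV-{j}. X$i$k) = 1 - X$i$j" using X by (auto simp: doubly_stochastic_def)
    have "\<exists>k\<in>UNIV-{j}. X$i$k > 0"
    proof (rule ccontr)
      assume "\<not> ?thesis"
      hence "(\<Sum>k\<in>UNIV-{j}. X$i$k) \<le> 0" by (intro sum_nonpos) (auto simp: not_less)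
      thus False using s that unfolding E_def by auto
    qed
    then obtain k where k: "k \<noteq> j" "X$i$k > 0" by auto
    have "X$i$k \<le> (\<Sum>k\<in>UNIV-{j}. X$i$k)" by (rule member_le_sum) (use k nn in auto)
    hence "(i,k) \<in> E" using s k that unfolding E_def by auto
    hence "{j,k} \<subseteq> {j'. (i,j') \<in> E}" using that by auto
    from card_mono[OF _ this] k show ?thesis by simp
  qed
  have colcard: "2 \<le> card {i'. (i',j) \<in> E}" if "(i,j) \<in> E" for i j
  proof -
    have "X$i$j + (\<Sum>k\<in>UNIV-{i}. X$k$j) = (\<Sum>k\<in>UNIV. X$k$j)"
      by (simp add: sum.remove)
    hence s: "(\<Sum>k\<in>UNIV-{i}. X$k$j) = 1 - X$i$j" using X by (auto simp: doubly_stochastic_def)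
    have "\<exists>k\<in>UNIV-{i}. X$k$j > 0"
    proof (rule ccontr)
      assume "\<not> ?thesis"
      hence "(\<Sum>k\<in>UNIV-{i}. X$k$j) \<le> 0" by (intro sum_nonpos) (auto simp: not_less)
      thus False using s that unfolding E_def by auto
    qed
    then obtain k where k: "k \<noteq> i" "X$k$j > 0" by auto
    have "X$k$j \<le> (\<Sum>k\<in>UNIV-{i}. X$k$j)" by (rule member_le_sum) (use k nn in auto)
    hence "(k,j) \<in> E" using s k that unfolding E_def by auto
    hence "{i,k} \<subseteq> {i'. (i',j) \<in> E}" using that by auto
    from card_mono[OF _ this] k show ?thesis by simp
  qed
  define R where "R = fst ` E"
  define C where "C = snd ` E"
  have "E = Sigma R (\<lambda>i. {j. (i,j) \<in> E})" unfolding R_def by force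
  hence "card E = (\<Sum>i\<in>R. card {j. (i,j) \<in> E})" by (metis card_SigmaI finite finite_subset subset_UNIV)
  also have "\<dots> \<ge> (\<Sum>i\<in>R. 2)" by (rule sum_mono) (use rowcard in \<open>force simp: R_def\<close>)
  finally have cR: "2 * card R \<le> card E" by simp
  have "(\<lambda>(i,j). (j,i)) ` E = Sigma C (\<lambda>j. {i. (i,j) \<in> E})" unfolding C_def by force
  moreover have "card ((\<lambda>(i,j). (j,i)) ` E) = card E"
    by (rule card_image) (auto simp: inj_on_def)
  ultimately have "card E = (\<Sum>j\<in>C. card {i. (i,j) \<in> E})" by (metis card_SigmaI finite finite_subset subset_UNIV)
  also have "\<dots> \<ge> (\<Sum>j\<in>C. 2)" by (rule sum_mono) (use colcard in \<open>force simp: C_def\<close>)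
  finally have cC: "2 * card C \<le> card E" by simp
  obtain c0 where c0: "c0 \<in> C" using Ene unfolding C_def by auto
  define Q where "Q = Inl ` R \<union> Inr ` (C - {c0})"
  have "card Q \<le> card (Inl ` R :: ('n + 'n) set) + card (Inr ` (C - {c0}) :: ('n + 'n) set)"
    unfolding Q_def by (rule card_Un_le)
  also have "\<dots> \<le> card R + card (C - {c0})" by (intro add_mono card_image_le) auto
  also have "card (C - {c0}) = card C - 1" using c0 by simp
  finally have cQ: "card Q < card E" using cR cC c0 card_gt_0_iff[of C] by force
  define a where "a = (\<lambda>q (v :: 'n \<times> 'n). case q of Inl i \<Rightarrow> if fst v = i then 1 else (0::real)
                                    | Inr j \<Rightarrow> if snd v = j then 1 else 0)"
  obtain x where x: "\<exists>v\<in>E. x v \<noteq> 0" "\<forall>q\<in>Q. (\<Sum>v\<in>E. a q v * x v) = 0"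
    using homog_nontrivial[of Q E a] cQ fE unfolding Q_def by auto
  define m where "m = Min ((\<lambda>v. min (X$fst v$snd v) (1 - X$fst v$snd v)) ` E)"
  have mpos: "0 < m" unfolding m_def using Ene by (subst Min_gr_iff) (auto simp: E_def)
  have mle0: "m \<le> min (X$i$j) (1 - X$i$j)" if "(i,j) \<in> E" for i j
  proof -
    have "min (X$i$j) (1 - X$i$j) \<in> (\<lambda>v. min (X$fst v$snd v) (1 - X$fst v$snd v)) ` E"
      using that by force
    thus ?thesis unfolding m_def by (intro Min_le) auto
  qed
  have mle: "m \<le> X$i$j" "m \<le> 1 - X$i$j" if "(i,j) \<in> E" for i j
    using mle0[OF that] by auto
  define M where "M = 1 + (\<Sum>v\<in>E. \<bar>x v\<bar>)"
  have xM: "\<bar>x v\<bar> < M" if "v \<in> E" for v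
  proof -
    have "\<bar>x v\<bar> \<le> (\<Sum>v\<in>E. \<bar>x v\<bar>)" by (rule member_le_sum) (use that in auto)
    thus ?thesis unfolding M_def by simp
  qed
  have Mpos: "0 < M" unfolding M_def by (simp add: add_pos_nonneg sum_nonneg)
  define \<delta> where "\<delta> = m / M"
  have dpos: "0 < \<delta>" using mpos Mpos by (simp add: \<delta>_def)
  define d :: "real^'n^'n" where "d = (\<chi> i j. if (i,j) \<in> E then \<delta> * x (i,j) else 0)"
  have dij: "d$i$j = (if (i,j) \<in> E then \<delta> * x (i,j) else 0)" for i j by (simp add: d_def)
  have rows: "(\<Sum>j\<in>UNIV. d$i$j) = 0" for i
  proof (cases "i \<in> R")
    case True
    hence "(\<Sum>v\<in>E. a (Inl i) v * x v) = 0" using x(2) unfolding Q_def by auto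
    hence "(\<Sum>j\<in>UNIV. if (i,j) \<in> E then x (i,j) else 0) = 0"
      using row_conv[where E=E and i=i and g=x] by (simp add: a_def)
    moreover have "(\<Sum>j\<in>UNIV. d$i$j) = \<delta> * (\<Sum>j\<in>UNIV. if (i,j) \<in> E then x (i,j) else 0)"
      unfolding sum_distrib_left by (rule sum.cong) (auto simp: dij)
    ultimately show ?thesis by simp
  next
    case False
    hence "(i,j) \<notin> E" for j unfolding R_def by force
    thus ?thesis unfolding dij by simp
  qed
  have cols: "(\<Sum>i\<in>UNIV. d$i$j) = 0" if "j \<noteq> c0" for j
  proof (cases "j \<in> C")
    case True
    hence "(\<Sum>v\<in>E. a (Inr j) v * x v) = 0" using x(2) that unfolding Q_def by auto
    hence "(\<Sum>i\<in>UNIV. if (i,j) \<in> E then x (i,j) else 0) = 0"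
      using col_conv[where E=E and j=j and g=x] by (simp add: a_def)
    moreover have "(\<Sum>i\<in>UNIV. d$i$j) = \<delta> * (\<Sum>i\<in>UNIV. if (i,j) \<in> E then x (i,j) else 0)"
      unfolding sum_distrib_left by (rule sum.cong) (auto simp: dij)
    ultimately show ?thesis by simp
  next
    case False
    hence "(i,j) \<notin> E" for i unfolding C_def by force
    thus ?thesis unfolding dij by simp
  qed
  have colsall: "(\<Sum>i\<in>UNIV. d$i$j) = 0" for j
  proof -
    have "(\<Sum>j\<in>UNIV. \<Sum>i\<in>UNIV. d$i$j) = (\<Sum>i\<in>UNIV. \<Sum>j\<in>UNIV. d$i$j)" by (rule sum.swap)
    also have "\<dots> = 0" using rows by simp
    finally have tot: "(\<Sum>j\<in>UNIV. \<Sum>i\<in>UNIV. d$i$j) = 0" .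
    have "(\<Sum>j\<in>UNIV. \<Sum>i\<in>UNIV. d$i$j) = (\<Sum>i\<in>UNIV. d$i$c0) + (\<Sum>j\<in>UNIV-{c0}. \<Sum>i\<in>UNIV. d$i$j)"
      by (simp add: sum.remove)
    also have "(\<Sum>j\<in>UNIV-{c0}. \<Sum>i\<in>UNIV. d$i$j) = 0" using cols by (intro sum.neutral) auto
    finally have c0z: "(\<Sum>i\<in>UNIV. d$i$c0) = 0" using tot by simp
    show ?thesis using c0z cols by (cases "j = c0") auto
  qed
  have small: "d$i$j = 0 \<or> (0 < X$i$j - \<bar>d$i$j\<bar> \<and> X$i$j + \<bar>d$i$j\<bar> < 1)" for i j
  proof (cases "(i,j) \<in> E")
    case True
    have "\<bar>d$i$j\<bar> = m * \<bar>x (i,j)\<bar> / M" using True mpos Mpos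
      by (simp add: dij \<delta>_def abs_mult)
    also have "\<dots> < m" using xM[OF True] mpos Mpos by (simp add: field_simps)
    finally show ?thesis using mle[OF True] by auto
  qed (simp add: dij)
  obtain v0 where v0: "v0 \<in> E" "x v0 \<noteq> 0" using x(1) by auto
  have "d$fst v0$snd v0 \<noteq> 0" using v0 dpos by (simp add: dij)
  hence "d \<noteq> 0" by auto
  thus ?thesis using rows colsall small by blast
qed


lemma S_perm:
  fixes \<pi> :: "'n::finite \<Rightarrow> 'n" and eps p :: real
  shows "(\<Sum>i\<in>UNIV. \<Sum>j\<in>UNIV. ((\<chi> i j. if \<pi> i = j then 1 else 0 :: real^'n^'n)$i$j + eps) powr p)
        = real CARD('n) * ((1 + eps) powr p + real (CARD('n) - 1) * eps powr p)"
proof -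
  have row: "(\<Sum>j\<in>UNIV. ((if \<pi> i = j then 1 else 0) + eps) powr p)
        = (1 + eps) powr p + real (CARD('n) - 1) * eps powr p" for i
  proof -
    have "(\<Sum>j\<in>UNIV. ((if \<pi> i = j then 1 else 0) + eps) powr p)
        = (1 + eps) powr p + (\<Sum>j\<in>UNIV-{\<pi> i}. ((if \<pi> i = j then 1 else 0) + eps) powr p)"
      by (subst sum.remove[of UNIV "\<pi> i"]) auto
    also have "(\<Sum>j\<in>UNIV-{\<pi> i}. ((if \<pi> i = j then 1 else 0) + eps) powr p) = (\<Sum>j\<in>UNIV-{\<pi> i}. eps powr p)"
      by (rule sum.cong) auto
    also have "\<dots> = real (CARD('n) - 1) * eps powr p" by simp
    finally show ?thesis .
  qed
  show ?thesis by (simp add: row)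
qed

theorem theorem3p2:
  fixes f :: "real^'n^'n \<Rightarrow> real"
    and nu_f_low nu_f_up p \<epsilon> \<sigma> :: real
    and Xs :: "real^'n^'n"
  assumes diff: "\<forall>X. f differentiable (at X)"
    and nu_le: "nu_f_low \<le> nu_f_up"
    and bounds: "\<forall>X\<in>doubly_stochastic. \<forall>Y\<in>doubly_stochastic.
         nu_f_low / 2 * (norm (Y - X))\<^sup>2 \<le> f Y - f X - frechet_derivative f (at X) (Y - X)
       \<and> f Y - f X - frechet_derivative f (at X) (Y - X) \<le> nu_f_up / 2 * (norm (Y - X))\<^sup>2"
    and p: "0 < p" "p < 1"
    and eps: "\<epsilon> \<ge> 0"
    and sigma: "\<sigma> > max (nu_f_up / (p * (1 - p) * (1 + \<epsilon>) powr (p - 2))) 0"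
    and Xs_mem: "Xs \<in> doubly_stochastic"
    and Xs_min: "\<forall>Y\<in>doubly_stochastic.
         f Xs + \<sigma> * (\<Sum>i\<in>UNIV. \<Sum>j\<in>UNIV. (Xs$i$j + \<epsilon>) powr p)
       \<le> f Y + \<sigma> * (\<Sum>i\<in>UNIV. \<Sum>j\<in>UNIV. (Y$i$j + \<epsilon>) powr p)"
  shows "Xs \<in> permutation_matrices \<and> (\<forall>Y\<in>permutation_matrices. f Xs \<le> f Y)"
proof -
  define S where "S = (\<lambda>Y::real^'n^'n. \<Sum>i\<in>UNIV. \<Sum>j\<in>UNIV. (Y$i$j + \<epsilon>) powr p)"
  define c where "c = p * (1 - p) * (1 + \<epsilon>) powr (p - 2)"
  have cpos: "0 < c" using p eps unfolding c_def by (intro mult_pos_pos) auto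
  have sc: "nu_f_up < \<sigma> * c" using sigma cpos unfolding c_def[symmetric]
    by (simp add: pos_divide_less_eq)
  have sig0: "0 \<le> \<sigma>" using sigma by simp
  have min: "f Xs + \<sigma> * S Xs \<le> f Y + \<sigma> * S Y" if "Y \<in> doubly_stochastic" for Y
    using Xs_min that unfolding S_def by blast
  have perm: "Xs \<in> permutation_matrices"
  proof (rule ccontr)
    assume np: "Xs \<notin> permutation_matrices"
    obtain d where d: "d \<noteq> 0" "\<forall>i. (\<Sum>j\<in>UNIV. d$i$j) = 0" "\<forall>j. (\<Sum>i\<in>UNIV. d$i$j) = 0"
      "\<forall>i j. d$i$j = 0 \<or> (0 < Xs$i$j - \<bar>d$i$j\<bar> \<and> Xs$i$j + \<bar>d$i$j\<bar> < 1)"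
      using perturb[OF Xs_mem np] by blast
    have nnX: "0 \<le> Xs$i$j" for i j using ds_bounds[OF Xs_mem] by simp
    have Xp: "Xs + d \<in> doubly_stochastic"
    proof -
      have "0 \<le> Xs$i$j + d$i$j" for i j using d(4) nnX[of i j] by (smt (verit))
      moreover have "(\<Sum>j\<in>UNIV. Xs$i$j + d$i$j) = 1" for i
        using d(2) Xs_mem by (simp add: sum.distrib doubly_stochastic_def)
      moreover have "(\<Sum>i\<in>UNIV. Xs$i$j + d$i$j) = 1" for j
        using d(3) Xs_mem by (simp add: sum.distrib doubly_stochastic_def)
      ultimately show ?thesis by (simp add: doubly_stochastic_def)
    qed
    have Xm: "Xs - d \<in> doubly_stochastic"
    proof -
      have "0 \<le> Xs$i$j - d$i$j" for i j using d(4) nnX[of i j] by (smt (verit))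
      moreover have "(\<Sum>j\<in>UNIV. Xs$i$j - d$i$j) = 1" for i
        using d(2) Xs_mem by (simp add: sum_subtractf doubly_stochastic_def)
      moreover have "(\<Sum>i\<in>UNIV. Xs$i$j - d$i$j) = 1" for j
        using d(3) Xs_mem by (simp add: sum_subtractf doubly_stochastic_def)
      ultimately show ?thesis by (simp add: doubly_stochastic_def)
    qed
    define L where "L = frechet_derivative f (at Xs)"
    have "(f has_derivative L) (at Xs)" unfolding L_def using diff frechet_derivative_works by blast
    hence lin: "linear L" by (rule has_derivative_linear)
    have fp: "f (Xs + d) - f Xs - L d \<le> nu_f_up / 2 * (norm d)\<^sup>2"
      using bounds Xs_mem Xp unfolding L_def by fastforce
    have fm0: "f (Xs - d) - f Xs - L (Xs - d - Xs) \<le> nu_f_up / 2 * (norm (Xs - d - Xs))\<^sup>2"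
      using bounds Xs_mem Xm unfolding L_def by blast
    have "L (Xs - d - Xs) = - L d" using linear_neg[OF lin, of d] by simp
    with fm0 have fm: "f (Xs - d) - f Xs + L d \<le> nu_f_up / 2 * (norm d)\<^sup>2" by simp
    have N: "(norm d)\<^sup>2 = (\<Sum>i\<in>UNIV. \<Sum>j\<in>UNIV. (d$i$j)\<^sup>2)"
    proof -
      have "(norm d)\<^sup>2 = d \<bullet> d" by (rule power2_norm_eq_inner)
      also have "\<dots> = (\<Sum>i\<in>UNIV. d$i \<bullet> d$i)" by (simp add: inner_vec_def)
      also have "\<dots> = (\<Sum>i\<in>UNIV. \<Sum>j\<in>UNIV. (d$i$j)\<^sup>2)"
        by (simp add: inner_vec_def inner_real_def power2_eq_square)
      finally show ?thesis .
    qed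
    have Npos: "0 < (norm d)\<^sup>2" using d(1) by simp
    have entry: "(Xs$i$j + d$i$j + \<epsilon>) powr p + (Xs$i$j - d$i$j + \<epsilon>) powr p - 2 * (Xs$i$j + \<epsilon>) powr p
         \<le> - c * (d$i$j)\<^sup>2" for i j
      unfolding c_def by (rule scalar_ineq) (use p eps d(4) in auto)
    have "S (Xs + d) + S (Xs - d) - 2 * S Xs
        = (\<Sum>i\<in>UNIV. \<Sum>j\<in>UNIV. (Xs$i$j + d$i$j + \<epsilon>) powr p + (Xs$i$j - d$i$j + \<epsilon>) powr p - 2 * (Xs$i$j + \<epsilon>) powr p)"
      unfolding S_def by (simp add: sum.distrib sum_subtractf sum_distrib_left)
    also have "\<dots> \<le> (\<Sum>i\<in>UNIV. \<Sum>j\<in>UNIV. - c * (d$i$j)\<^sup>2)"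
      by (intro sum_mono entry)
    also have "\<dots> = - c * (norm d)\<^sup>2" unfolding N by (simp add: sum_distrib_left)
    finally have Sineq: "S (Xs + d) + S (Xs - d) - 2 * S Xs \<le> - c * (norm d)\<^sup>2" .
    have "\<sigma> * (S (Xs + d) + S (Xs - d) - 2 * S Xs) \<le> \<sigma> * (- c * (norm d)\<^sup>2)"
      by (rule mult_left_mono[OF Sineq sig0])
    moreover have "0 < (\<sigma> * c - nu_f_up) * (norm d)\<^sup>2" using sc Npos by simp
    moreover have "f Xs + \<sigma> * S Xs \<le> f (Xs + d) + \<sigma> * S (Xs + d)" by (rule min[OF Xp])
    moreover have "f Xs + \<sigma> * S Xs \<le> f (Xs - d) + \<sigma> * S (Xs - d)" by (rule min[OF Xm])
    ultimately show False using fp fm by (simp add: algebra_simps)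
  qed
  have "f Xs \<le> f Y" if Y: "Y \<in> permutation_matrices" for Y
  proof -
    obtain \<pi> where pp: "\<pi> permutes UNIV" and \<pi>: "Y = (\<chi> i j. if \<pi> i = j then 1 else 0)" using Y unfolding permutation_matrices_def by blast
    obtain \<tau> where \<tau>: "Xs = (\<chi> i j. if \<tau> i = j then 1 else 0)" using perm unfolding permutation_matrices_def by blast
    have "S Y = S Xs" unfolding S_def \<pi> \<tau> S_perm by simp
    have "\<forall>i j. Y$i$j \<ge> 0" using \<pi> by simp
    moreover have "(\<Sum>j\<in>UNIV. Y$i$j) = 1" for i using \<pi> by simp
    moreover have "(\<Sum>i\<in>UNIV. Y$i$j) = 1" for j
    proof -
      have "(\<Sum>i\<in>UNIV. Y$i$j) = (\<Sum>i\<in>UNIV. if i = inv \<pi> j then 1 else 0)"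
        unfolding \<pi> by (rule sum.cong) (use permutes_inverses[OF pp] in auto)
      thus ?thesis by simp
    qed
    ultimately have "Y \<in> doubly_stochastic" unfolding doubly_stochastic_def by blast
    with min \<open>S Y = S Xs\<close> show ?thesis by force
  qed
  with perm show ?thesis by blast
qed

end
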